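(* Let $r\in\mathbb{Z}$, let $P(r)$ be the lower-triangular matrix with $(n,k)$ entry $[x^n]\,\frac{1+rx^2}{1+x^2}\left(\frac{x}{1+x^2}\right)^k$, let $M(r)=P(r)^{-1}$, and let $s_n=s_n(r)=\sum_{k=0}^n M(r)_{n,k}$ be the row sums of $M(r)$. Then for all $n\ge 0$, $$s_n=\sum_{k=0}^{\lfloor \frac{n}{2} \rfloor} \binom{n}{\lfloor \frac{n-2k}{2} \rfloor}(-1)^k r^k.$$
   Context: $[x^n]h(x)$ denotes the coefficient of $x^n$ in $h(x)$. $P(r)$ is the coefficient array of the restricted Chebyshev–Boubaker polynomials and $M(r)$ is its moment matrix, the Riordan array $\left(\frac{\sqrt{1-4x^2}(r-1)+r+1}{2(r+x^2(r-1)^2)}, \frac{1-\sqrt{1-4x^2}}{2x}\right)$. *)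

theory Defs
  imports Complex_Main "HOL-Computational_Algebra.Formal_Power_Series"
begin

definition P_mat :: "int \<Rightarrow> nat \<Rightarrow> nat \<Rightarrow> real" where
  "P_mat r n k = fps_nth ((1 + fps_const (of_int r) * fps_X ^ 2) / (1 + fps_X ^ 2)
                          * (fps_X / (1 + fps_X ^ 2)) ^ k) n"

definition M_mat :: "int \<Rightarrow> nat \<Rightarrow> nat \<Rightarrow> real" where
  "M_mat r = (THE M. (\<forall>n k. n < k \<longrightarrow> M n k = 0) \<and>
                     (\<forall>n k. (\<Sum>j\<le>n. P_mat r n j * M j k) = (if n = k then 1 else 0)))"

end

theory Submission
  imports Defs
begin
unbundle fps_syntax



definition EE :: "real fps" where "EE = 1 + fps_X ^ 2"
definition hh :: "nat \<Rightarrow> real fps" where "hh j = (fps_X / EE) ^ j / EE"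

lemma EE0: "EE $ 0 = 1" by (simp add: EE_def)

lemma EE_mult_nth: "(EE * a) $ n = a $ n + (if 2 \<le> n then a $ (n - 2) else 0)"
  by (simp add: EE_def distrib_right fps_X_power_mult_nth)

lemma EE_inv: "EE * inverse EE = 1"
  by (rule inverse_mult_eq_1') (simp add: EE0)

lemma hh0: "EE * hh 0 = 1"
  by (simp add: hh_def fps_divide_unit EE0 EE_inv)

lemma hhS: "EE * hh (Suc j) = fps_X * hh j"
proof -
  have "EE * hh (Suc j) = (EE * inverse EE) * (fps_X * ((fps_X * inverse EE) ^ j * inverse EE))"
    by (simp add: hh_def fps_divide_unit EE0 algebra_simps)
  also have "\<dots> = fps_X * hh j" by (simp add: EE_inv hh_def fps_divide_unit EE0)
  finally show ?thesis .
qed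

fun H :: "nat \<Rightarrow> nat \<Rightarrow> real" where
  "H 0 j = (if j = 0 then 1 else 0)"
| "H (Suc 0) j = (if j = 1 then 1 else 0)"
| "H (Suc (Suc n)) 0 = - H n 0"
| "H (Suc (Suc n)) (Suc j) = H (Suc n) j - H n (Suc j)"

lemma hh_H: "\<forall>j. hh j $ n = H n j"
proof (induction n rule: less_induct)
  case (less n)
  show ?case
  proof
    fix j
    consider "n = 0" | "n = 1" | m where "n = Suc (Suc m)"
      by (metis One_nat_def not0_implies_Suc)
    then show "hh j $ n = H n j"
    proof cases
      case 1
      then show ?thesis
      proof (cases j)
        case 0
        with 1 show ?thesis using arg_cong[OF hh0, of "\<lambda>f. f $ 0", unfolded EE_mult_nth] by simp
      next
        case (Suc j')
        with 1 show ?thesis using arg_cong[OF hhS[of j'], of "\<lambda>f. f $ 0", unfolded EE_mult_nth] by simp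
      qed
    next
      case 2
      then show ?thesis
      proof (cases j)
        case 0
        with 2 show ?thesis using arg_cong[OF hh0, of "\<lambda>f. f $ 1", unfolded EE_mult_nth] by simp
      next
        case (Suc j')
        have "hh j' $ 0 = H 0 j'" using less[of 0] 2 by simp
        with 2 Suc show ?thesis using arg_cong[OF hhS[of j'], of "\<lambda>f. f $ 1", unfolded EE_mult_nth] by simp
      qed
    next
      case 3
      then show ?thesis
      proof (cases j)
        case 0
        have "hh 0 $ m = H m 0" using less[of m] 3 by simp
        with 3 0 show ?thesis using arg_cong[OF hh0, of "\<lambda>f. f $ Suc (Suc m)", unfolded EE_mult_nth] by simp
      next
        case (Suc j')
        have "hh (Suc j') $ m = H m (Suc j')" using less[of m] 3 by simp
        moreover have "hh j' $ Suc m = H (Suc m) j'" using less[of "Suc m"] 3 by simp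
        ultimately show ?thesis using 3 Suc arg_cong[OF hhS[of j'], of "\<lambda>f. f $ Suc (Suc m)", unfolded EE_mult_nth]
          by simp
      qed
    qed
  qed
qed

lemma H_above: "n < j \<Longrightarrow> H n j = 0"
  by (induction n j rule: H.induct) auto

lemma H_diag: "H n n = 1"
proof (induction n rule: less_induct)
  case (less n)
  show ?case
  proof (cases n)
    case (Suc m)
    then show ?thesis using less[of m] by (cases m) (auto simp: H_above)
  qed simp
qed

lemma H_par: "odd (n + j) \<Longrightarrow> H n j = 0"
  by (induction n j rule: H.induct) (auto elim: oddE)

lemma P_H: "P_mat r n j = H n j + (if 2 \<le> n then of_int r * H (n - 2) j else 0)"
proof -
  have "P_mat r n j = ((1 + fps_const (of_int r) * fps_X ^ 2) * hh j) $ n"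
    unfolding P_mat_def hh_def EE_def[symmetric]
    by (simp add: fps_divide_unit EE0 algebra_simps)
  also have "\<dots> = H n j + (if 2 \<le> n then of_int r * H (n - 2) j else 0)"
    by (simp add: distrib_right mult.assoc fps_X_power_mult_nth hh_H not_le)
  finally show ?thesis .
qed



definition w :: "nat \<Rightarrow> nat \<Rightarrow> real" where
  "w k j = (if 2 * k \<le> j then real (j choose ((j - 2 * k) div 2)) else 0)"

lemma w_even: "w k (2 * a + 1) = w k (2 * a) + w (Suc k) (2 * a)"
proof -
  consider "k < a" | "k = a" | "a < k" by arith
  then show ?thesis
  proof cases
    case 1
    then obtain x where x: "a - k = Suc x" by (metis Suc_diff_Suc)
    have e1: "(2 * a + 1 - 2 * k) div 2 = Suc x" using x 1 by arith
    have e2: "(2 * a - 2 * k) div 2 = Suc x" using x 1 by arith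
    have e3: "(2 * a - 2 * Suc k) div 2 = x" using x 1 by arith
    show ?thesis using 1 unfolding w_def e1 e2 e3 by simp
  next
    case 2 then show ?thesis by (simp add: w_def)
  next
    case 3 then show ?thesis by (simp add: w_def)
  qed
qed

lemma w_odd: "w (Suc k) (2 * a + 2) = w (Suc k) (2 * a + 1) + w k (2 * a + 1)"
proof -
  consider "k < a" | "k = a" | "a < k" by arith
  then show ?thesis
  proof cases
    case 1
    then obtain x where x: "a - k = Suc x" by (metis Suc_diff_Suc)
    have e1: "(2 * a + 2 - 2 * Suc k) div 2 = Suc x" using x 1 by arith
    have e2: "(2 * a + 1 - 2 * Suc k) div 2 = x" using x 1 by arith
    have e3: "(2 * a + 1 - 2 * k) div 2 = Suc x" using x 1 by arith
    have p: "((2 * a + 2) choose Suc x) = ((2 * a + 1) choose x) + ((2 * a + 1) choose Suc x)"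
      using binomial_Suc_Suc[of "2 * a + 1" x] by simp
    show ?thesis using 1 unfolding w_def e1 e2 e3 p by simp
  next
    case 2 then show ?thesis by (simp add: w_def)
  next
    case 3 then show ?thesis by (simp add: w_def)
  qed
qed

lemma w_odd0: "w 0 (2 * a + 2) = 2 * w 0 (2 * a + 1)"
proof -
  have a: "(2 * a + 2) div 2 = Suc a" "(2 * a + 1) div 2 = a" by arith+
  have "((2 * a + 2) choose (Suc a)) = ((2*a+1) choose a) + ((2*a+1) choose (Suc a))"
    using binomial_Suc_Suc[of "2 * a + 1" a] by simp
  moreover have "((2*a+1) choose (Suc a)) = ((2*a+1) choose a)"
    by (subst binomial_symmetric) auto
  ultimately show ?thesis unfolding w_def a by simp
qed



definition Bk :: "nat \<Rightarrow> nat \<Rightarrow> real" where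
  "Bk k n = (\<Sum>j\<le>n. H n j * w k j)"

lemma Bk_ext: "n \<le> N \<Longrightarrow> Bk k n = (\<Sum>j\<le>N. H n j * w k j)"
  unfolding Bk_def by (rule sum.mono_neutral_left) (auto simp: H_above)

lemma Bk_step: "Bk k (Suc (Suc m)) + Bk k m = (\<Sum>j\<le>Suc m. H (Suc m) j * w k (Suc j))"
proof -
  have "Bk k (Suc (Suc m)) = H (Suc (Suc m)) 0 * w k 0 + (\<Sum>j\<le>Suc m. H (Suc (Suc m)) (Suc j) * w k (Suc j))"
    unfolding Bk_def by (subst sum.atMost_Suc_shift) simp
  moreover have "Bk k m = H m 0 * w k 0 + (\<Sum>j\<le>Suc m. H m (Suc j) * w k (Suc j))"
    by (subst Bk_ext[of m "Suc (Suc m)"]) (simp, subst sum.atMost_Suc_shift, simp)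
  ultimately have "Bk k (Suc (Suc m)) + Bk k m = (H (Suc (Suc m)) 0 + H m 0) * w k 0 +
     (\<Sum>j\<le>Suc m. (H (Suc (Suc m)) (Suc j) + H m (Suc j)) * w k (Suc j))"
    by (simp add: distrib_right sum.distrib del: H.simps)
  then show ?thesis by simp
qed

lemma Bk_val: "\<forall>k. Bk k n = (if 2 * k \<le> n then 1 else 0)"
proof (induction n rule: less_induct)
  case (less n)
  show ?case
  proof
    fix k
    consider "n = 0" | "n = 1" | m where "n = Suc (Suc m)"
      by (metis One_nat_def not0_implies_Suc)
    then show "Bk k n = (if 2 * k \<le> n then 1 else 0)"
    proof cases
      case 1 then show ?thesis by (simp add: Bk_def w_def)
    next
      case 2 then show ?thesis by (simp add: Bk_def w_def)
    next
      case 3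
      have IHm: "Bk k' m = (if 2 * k' \<le> m then 1 else 0)" for k' using less[of m] 3 by simp
      have IH1: "Bk k' (Suc m) = (if 2 * k' \<le> Suc m then 1 else 0)" for k' using less[of "Suc m"] 3 by simp
      have "(\<Sum>j\<le>Suc m. H (Suc m) j * w k (Suc j)) =
            (if 2 * k \<le> Suc (Suc m) then 1 else 0) + (if 2 * k \<le> m then 1 else 0)"
      proof (cases "odd m")
        case True
        have "(\<Sum>j\<le>Suc m. H (Suc m) j * w k (Suc j)) = (\<Sum>j\<le>Suc m. H (Suc m) j * w k j + H (Suc m) j * w (Suc k) j)"
        proof (rule sum.cong[OF refl])
          fix j
          show "H (Suc m) j * w k (Suc j) = H (Suc m) j * w k j + H (Suc m) j * w (Suc k) j"
          proof (cases "even j")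
            case True
            then obtain a where "j = 2 * a" by (elim evenE)
            then show ?thesis using w_even[of k a] by (simp add: algebra_simps)
          next
            case False
            then show ?thesis using \<open>odd m\<close> H_par[of "Suc m" j] by simp
          qed
        qed
        also have "\<dots> = Bk k (Suc m) + Bk (Suc k) (Suc m)" by (simp add: Bk_def sum.distrib)
        finally have eq: "(\<Sum>j\<le>Suc m. H (Suc m) j * w k (Suc j)) = Bk k (Suc m) + Bk (Suc k) (Suc m)" .
        have "2 * k \<le> Suc m \<longleftrightarrow> 2 * k \<le> Suc (Suc m)" "2 * Suc k \<le> Suc m \<longleftrightarrow> 2 * k \<le> m"
          using True by presburger+
        then show ?thesis unfolding eq IH1 by simp
      next
        case False
        show ?thesis
        proof (cases k)
          case 0
          have "(\<Sum>j\<le>Suc m. H (Suc m) j * w k (Suc j)) = (\<Sum>j\<le>Suc m. 2 * (H (Suc m) j * w 0 j))"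
          proof (rule sum.cong[OF refl])
            fix j
            show "H (Suc m) j * w k (Suc j) = 2 * (H (Suc m) j * w 0 j)"
            proof (cases "even j")
              case False
              then obtain a where "j = 2 * a + 1" by (elim oddE)
              then show ?thesis using w_odd0[of a] 0 by (simp add: algebra_simps)
            next
              case True
              then show ?thesis using \<open>\<not> odd m\<close> H_par[of "Suc m" j] by simp
            qed
          qed
          also have "\<dots> = 2 * Bk 0 (Suc m)" by (simp add: Bk_def sum_distrib_left)
          finally show ?thesis using 0 by (simp add: IH1)
        next
          case (Suc k')
          have "(\<Sum>j\<le>Suc m. H (Suc m) j * w k (Suc j)) = (\<Sum>j\<le>Suc m. H (Suc m) j * w k j + H (Suc m) j * w k' j)"
          proof (rule sum.cong[OF refl])
            fix j
            show "H (Suc m) j * w k (Suc j) = H (Suc m) j * w k j + H (Suc m) j * w k' j"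
            proof (cases "even j")
              case False
              then obtain a where "j = 2 * a + 1" by (elim oddE)
              then show ?thesis using w_odd[of k' a] Suc by (simp add: algebra_simps)
            next
              case True
              then show ?thesis using \<open>\<not> odd m\<close> H_par[of "Suc m" j] by simp
            qed
          qed
          also have "\<dots> = Bk k (Suc m) + Bk k' (Suc m)" by (simp add: Bk_def sum.distrib)
          finally have eq: "(\<Sum>j\<le>Suc m. H (Suc m) j * w k (Suc j)) = Bk k (Suc m) + Bk k' (Suc m)" .
          have "2 * k \<le> Suc m \<longleftrightarrow> 2 * k \<le> m" "2 * k' \<le> Suc m \<longleftrightarrow> 2 * k \<le> Suc (Suc m)"
            using False Suc by presburger+
          then show ?thesis unfolding eq IH1 by simp
        qed
      qed
      then show ?thesis using Bk_step[of k m] IHm[of k] 3 by simp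
    qed
  qed
qed




definition tt :: "int \<Rightarrow> nat \<Rightarrow> real" where
  "tt r j = (\<Sum>k\<le>j div 2. real (j choose ((j - 2 * k) div 2)) * (-1) ^ k * (of_int r) ^ k)"

lemma tt_w: "j \<le> n \<Longrightarrow> tt r j = (\<Sum>k\<le>n div 2. ((-1) ^ k * of_int r ^ k) * w k j)"
proof -
  assume jn: "j \<le> n"
  have "(\<Sum>k\<le>n div 2. ((-1) ^ k * of_int r ^ k) * w k j) = (\<Sum>k\<le>j div 2. ((-1) ^ k * of_int r ^ k) * w k j)"
    using jn by (intro sum.mono_neutral_right) (auto simp: w_def div_le_mono)
  also have "\<dots> = tt r j" unfolding tt_def
    by (intro sum.cong refl) (auto simp: w_def)
  finally show ?thesis by simp
qed

lemma A_val: "(\<Sum>j\<le>n. H n j * tt r j) = (\<Sum>k\<le>n div 2. (-1) ^ k * (of_int r :: real) ^ k)"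
proof -
  have "(\<Sum>j\<le>n. H n j * tt r j) = (\<Sum>j\<le>n. \<Sum>k\<le>n div 2. ((-1) ^ k * of_int r ^ k) * (H n j * w k j))"
    by (intro sum.cong refl) (simp add: tt_w sum_distrib_left algebra_simps)
  also have "\<dots> = (\<Sum>k\<le>n div 2. ((-1) ^ k * of_int r ^ k) * Bk k n)"
    by (subst sum.swap) (simp add: Bk_def sum_distrib_left)
  also have "\<dots> = (\<Sum>k\<le>n div 2. (-1) ^ k * (of_int r :: real) ^ k)"
    by (intro sum.cong refl) (auto simp: Bk_val)
  finally show ?thesis .
qed


lemma Pt: "(\<Sum>j\<le>n. P_mat r n j * tt r j) = 1"
proof (cases "2 \<le> n")
  case False
  then have "(\<Sum>j\<le>n. P_mat r n j * tt r j) = (\<Sum>j\<le>n. H n j * tt r j)" by (simp add: P_H)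
  also have "\<dots> = 1" using False by (simp add: A_val)
  finally show ?thesis .
next
  case True
  then obtain m where m: "n = Suc (Suc m)" by (metis add_2_eq_Suc le_Suc_ex)
  let ?S = "\<lambda>q. (\<Sum>k\<le>q div 2. (-1) ^ k * (of_int r :: real) ^ k)"
  have e1: "(\<Sum>j\<le>n. P_mat r n j * tt r j) = (\<Sum>j\<le>n. H n j * tt r j) + of_int r * (\<Sum>j\<le>n. H m j * tt r j)"
    using m by (simp add: P_H distrib_right sum.distrib sum_distrib_left algebra_simps)
  have e2: "(\<Sum>j\<le>n. H m j * tt r j) = ?S m"
  proof -
    have "(\<Sum>j\<le>n. H m j * tt r j) = (\<Sum>j\<le>m. H m j * tt r j)"
      using m by (intro sum.mono_neutral_right) (auto simp: H_above)
    then show ?thesis by (simp only: A_val)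
  qed
  have nd: "n div 2 = Suc (m div 2)" using m by simp
  have e3: "?S n = 1 + (\<Sum>k\<le>m div 2. (-1) ^ Suc k * (of_int r :: real) ^ Suc k)"
    unfolding nd by (subst sum.atMost_Suc_shift) simp
  have e4: "(\<Sum>k\<le>m div 2. (-1) ^ Suc k * (of_int r :: real) ^ Suc k) = - (of_int r * ?S m)"
    by (simp add: sum_distrib_left sum_negf[symmetric] mult.left_commute)
  show ?thesis unfolding e1 e2 A_val e3 e4 by simp
qed


lemma P_diag: "P_mat r n n = 1"
  by (simp add: P_H H_diag H_above)

lemma P_above: "n < j \<Longrightarrow> P_mat r n j = 0"
  by (simp add: P_H H_above)

lemma lt_unique:
  fixes Q :: "nat \<Rightarrow> nat \<Rightarrow> real"
  assumes d: "\<And>n. Q n n = 1"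
    and e: "\<And>n. (\<Sum>j\<le>n. Q n j * x j) = (\<Sum>j\<le>n. Q n j * y j)"
  shows "x n = y n"
proof (induction n rule: less_induct)
  case (less n)
  have "(\<Sum>j<n. Q n j * x j) = (\<Sum>j<n. Q n j * y j)"
    by (intro sum.cong refl) (simp add: less)
  moreover have "(\<Sum>j\<le>n. Q n j * x j) = (\<Sum>j<n. Q n j * x j) + x n"
    "(\<Sum>j\<le>n. Q n j * y j) = (\<Sum>j<n. Q n j * y j) + y n"
    by (simp_all add: lessThan_Suc_atMost[symmetric] d)
  ultimately show ?case using e[of n] by simp
qed

function Mc :: "(nat \<Rightarrow> nat \<Rightarrow> real) \<Rightarrow> nat \<Rightarrow> nat \<Rightarrow> real" where
  "Mc Q k n = (if n < k then 0 else if n = k then 1 else - (\<Sum>j<n. Q n j * Mc Q k j))"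
  by auto
termination by (relation "measure (\<lambda>(Q, k, n). n)") auto

declare Mc.simps[simp del]

lemma Mc_ok:
  fixes Q :: "nat \<Rightarrow> nat \<Rightarrow> real"
  assumes d: "\<And>n. Q n n = 1"
  shows "(\<forall>n k. n < k \<longrightarrow> Mc Q k n = 0) \<and>
         (\<forall>n k. (\<Sum>j\<le>n. Q n j * Mc Q k j) = (if n = k then 1 else 0))"
proof (intro conjI allI impI)
  fix n k :: nat
  assume "n < k" then show "Mc Q k n = 0" by (simp add: Mc.simps)
next
  fix n k :: nat
  have s: "(\<Sum>j\<le>n. Q n j * Mc Q k j) = (\<Sum>j<n. Q n j * Mc Q k j) + Mc Q k n"
    by (simp add: lessThan_Suc_atMost[symmetric] d)
  consider "n < k" | "n = k" | "k < n" by arith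
  then show "(\<Sum>j\<le>n. Q n j * Mc Q k j) = (if n = k then 1 else 0)"
  proof cases
    case 1
    then show ?thesis by (auto simp: Mc.simps intro!: sum.neutral)
  next
    case 2
    have "(\<Sum>j<n. Q n j * Mc Q k j) = 0" using 2 by (auto simp: Mc.simps intro!: sum.neutral)
    with 2 s show ?thesis by (simp add: Mc.simps)
  next
    case 3
    have "Mc Q k n = - (\<Sum>j<n. Q n j * Mc Q k j)" using 3 by (subst Mc.simps) simp
    with 3 s show ?thesis by simp
  qed
qed

lemma M_props:
  "(\<forall>n k. n < k \<longrightarrow> M_mat r n k = 0) \<and>
   (\<forall>n k. (\<Sum>j\<le>n. P_mat r n j * M_mat r j k) = (if n = k then 1 else 0))"
proof -
  let ?Pr = "\<lambda>M. (\<forall>n k. n < k \<longrightarrow> M n k = 0) \<and>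
                     (\<forall>n k. (\<Sum>j\<le>n. P_mat r n j * M j k) = (if n = k then 1 else 0))"
  have ex: "?Pr (\<lambda>n k. Mc (P_mat r) k n)" using Mc_ok[of "P_mat r"] P_diag by simp
  have un: "M = M'" if "?Pr M" "?Pr M'" for M M'
  proof (intro ext)
    fix n k
    show "M n k = M' n k"
      by (rule lt_unique[of "P_mat r" "\<lambda>j. M j k" "\<lambda>j. M' j k" n]) (use that P_diag in auto)
  qed
  have "\<exists>!M. ?Pr M"
  proof (rule ex1I[of _ "\<lambda>n k. Mc (P_mat r) k n"])
    show "?Pr (\<lambda>n k. Mc (P_mat r) k n)" by (rule ex)
  next
    fix M assume "?Pr M" then show "M = (\<lambda>n k. Mc (P_mat r) k n)" by (rule un[OF _ ex])
  qed
  then have "?Pr (THE M. ?Pr M)" by (rule theI')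
  then show ?thesis unfolding M_mat_def .
qed

theorem mainTheorem5:
  fixes r :: int and n :: nat
  shows "(\<Sum>k\<le>n. M_mat r n k) =
         (\<Sum>k\<le>n div 2. real (n choose ((n - 2 * k) div 2)) * (-1) ^ k * (of_int r) ^ k)"
proof -
  have lo: "\<And>n k. n < k \<Longrightarrow> M_mat r n k = 0" and inv: "\<And>n k. (\<Sum>j\<le>n. P_mat r n j * M_mat r j k) = (if n = k then 1 else 0)"
    using M_props by blast+
  have rs: "(\<Sum>j\<le>m. P_mat r m j * (\<Sum>k\<le>j. M_mat r j k)) = 1" for m
  proof -
    have "(\<Sum>j\<le>m. P_mat r m j * (\<Sum>k\<le>j. M_mat r j k)) = (\<Sum>j\<le>m. \<Sum>k\<le>m. P_mat r m j * M_mat r j k)"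
    proof (intro sum.cong refl)
      fix j assume "j \<in> {..m}"
      then have "(\<Sum>k\<le>j. M_mat r j k) = (\<Sum>k\<le>m. M_mat r j k)"
        by (intro sum.mono_neutral_left) (auto simp: lo)
      then show "P_mat r m j * (\<Sum>k\<le>j. M_mat r j k) = (\<Sum>k\<le>m. P_mat r m j * M_mat r j k)"
        by (simp add: sum_distrib_left)
    qed
    also have "\<dots> = (\<Sum>k\<le>m. if m = k then 1 else 0)" by (subst sum.swap) (simp add: inv)
    also have "\<dots> = 1" by simp
    finally show ?thesis .
  qed
  have "(\<Sum>k\<le>n. M_mat r n k) = tt r n"
    by (rule lt_unique[of "P_mat r"]) (use rs Pt P_diag in auto)
  then show ?thesis by (simp add: tt_def)
qed

end
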